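(* Fix a constant $c\ge 10$. Consider the random pairwise load balancing process on $n\ge2$ nodes, where tokens are moved in skip mode. Let $t$ be a time step and condition on any history up to time $t$ for which $t\ge T_1$. Let $b$ be a token whose normalized height satisfies $\hat h_b(t)>2c$. Then, conditionally on this history, with probability at least $1/n$ we have $\hat h_b(t+1)\le \frac{17}{20}\,\hat h_b(t)$.
   Context: Random pairwise load balancing process: $n$ nodes, $m$ tokens, load vector $\ell(t)\in\mathbb{Z}^n$. In each time step $t$, independently, an ordered pair $(u,v)$ of distinct nodes is chosen uniformly at random and loads become $\ell_u(t+1)=\lceil(\ell_u(t)+\ell_v(t))/2\rceil$, $\ell_v(t+1)=\lfloor(\ell_u(t)+\ell_v(t))/2\rfloor$. Average load $\varnothing=m/n$, $\mathrm{round}(\varnothing)$ is $\varnothing$ rounded to the nearest integer, and $\Phi(\ell)=\sum_i(\ell_i-\varnothing)^2$. $T_1$ is the first time $t$ with $\Phi(\ell(t))<n$. For the analysis, tokens on each node are kept in a linear (stack) order; the height $h_b(t)$ of token $b$ is the number of tokens preceding (below) $b$ on its node, and the normalized height is $\hat h_b(t)=h_b(t)-\mathrm{round}(\varnothing)$. Skip mode: when $k$ tokens must move from the node with larger load to the node with smaller load, the moved tokens are chosen starting from the topmost token of the larger node and taking every second token downward (top, third from top, fifth from top, …) until $k$ tokens are selected; these are then placed on top of the receiving node in their original relative order, and the remaining tokens of the larger node keep their relative order. *)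

theory Defs
  imports Complex_Main
begin

text \<open>Nodes are 0..<n. A configuration maps each node to its stack of tokens,
  listed from bottom to top. The load of node i is the length of its stack.\<close>

type_synonym 'tok config = "nat \<Rightarrow> 'tok list"

definition wf_config :: "nat \<Rightarrow> 'tok config \<Rightarrow> bool" where
  "wf_config n s \<longleftrightarrow> (\<forall>i<n. distinct (s i)) \<and>
     (\<forall>i<n. \<forall>j<n. i \<noteq> j \<longrightarrow> set (s i) \<inter> set (s j) = {})"

text \<open>Skip mode: from a stack of length len, the k selected tokens are the top one,
  the third from top, the fifth from top, ... (indices counted from the bottom).\<close>
definition skip_sel :: "nat \<Rightarrow> nat \<Rightarrow> nat set" where
  "skip_sel len k = {j. j < len \<and> len - 1 - j < 2 * k \<and> even (len - 1 - j)}"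

text \<open>One balancing step on the ordered pair (u,v): u gets the ceiling, v the floor.\<close>
definition step :: "'tok config \<Rightarrow> nat \<times> nat \<Rightarrow> 'tok config" where
  "step s p = (case p of (u, v) \<Rightarrow>
     let a = length (s u); b = length (s v) in
     if b \<le> a then
       (let k = (a - b) div 2; S = skip_sel a k in
        s(u := nths (s u) (- S), v := s v @ nths (s u) S))
     else
       (let k = (b - a + 1) div 2; S = skip_sel b k in
        s(v := nths (s v) (- S), u := s u @ nths (s v) S)))"

definition Phi :: "nat \<Rightarrow> nat \<Rightarrow> 'tok config \<Rightarrow> real" where
  "Phi n m s = (\<Sum>i<n. (real (length (s i)) - real m / real n)\<^sup>2)"

definition node_of :: "nat \<Rightarrow> 'tok config \<Rightarrow> 'tok \<Rightarrow> nat" where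
  "node_of n s b = (THE i. i < n \<and> b \<in> set (s i))"

definition height :: "nat \<Rightarrow> 'tok config \<Rightarrow> 'tok \<Rightarrow> nat" where
  "height n s b = length (takeWhile (\<lambda>x. x \<noteq> b) (s (node_of n s b)))"

definition nheight :: "nat \<Rightarrow> nat \<Rightarrow> 'tok config \<Rightarrow> 'tok \<Rightarrow> int" where
  "nheight n m s b = int (height n s b) - round (real m / real n)"

definition pairs :: "nat \<Rightarrow> (nat \<times> nat) set" where
  "pairs n = {(u, v). u < n \<and> v < n \<and> u \<noteq> v}"

end

theory Submission
  imports Defs
begin

lemma skip_card_le: "card (skip_sel a k) \<le> k"
proof -
  have "skip_sel a k \<subseteq> (\<lambda>i. a - 1 - 2*i) ` {..<k}"
  proof
    fix j assume "j \<in> skip_sel a k"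
    hence j: "j < a" "a - 1 - j < 2*k" "even (a - 1 - j)" by (auto simp: skip_sel_def)
    show "j \<in> (\<lambda>i. a - 1 - 2*i) ` {..<k}"
      by (rule image_eqI[where x="(a-1-j) div 2"]) (use j in auto)
  qed
  hence "card (skip_sel a k) \<le> card ((\<lambda>i. a - 1 - 2*i) ` {..<k})"
    by (intro card_mono) auto
  also have "\<dots> \<le> k" using card_image_le[of "{..<k}"] by simp
  finally show ?thesis .
qed

lemma skip_below:
  assumes "h < a" "2*k \<le> a + 1"
  shows "card {j \<in> skip_sel a k. j < h} = k - Suc ((a - 1 - h) div 2)"
proof -
  let ?d = "a - 1 - h"
  have eq: "{j \<in> skip_sel a k. j < h} = (\<lambda>i. a - 1 - 2*i) ` {Suc (?d div 2)..<k}"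
  proof
    show "{j \<in> skip_sel a k. j < h} \<subseteq> (\<lambda>i. a - 1 - 2*i) ` {Suc (?d div 2)..<k}"
    proof
      fix j assume "j \<in> {j \<in> skip_sel a k. j < h}"
      hence j: "j < a" "a - 1 - j < 2*k" "even (a - 1 - j)" "j < h" by (auto simp: skip_sel_def)
      define e where "e = a - 1 - j"
      obtain f where f: "e = 2*f" using j(3) e_def by blast
      have je1: "j = a - 1 - e" using j e_def by arith
      have je2: "e > ?d" using j e_def assms by arith
      note je = je1 je2
      have "j = a - 1 - 2*f" using je f by simp
      moreover have "f < k" using j(2) e_def f by simp
      moreover have "Suc (?d div 2) \<le> f" using je(2) f by linarith
      ultimately show "j \<in> (\<lambda>i. a - 1 - 2*i) ` {Suc (?d div 2)..<k}" by auto
    qed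
  next
    show "(\<lambda>i. a - 1 - 2*i) ` {Suc (?d div 2)..<k} \<subseteq> {j \<in> skip_sel a k. j < h}"
    proof
      fix j assume "j \<in> (\<lambda>i. a - 1 - 2*i) ` {Suc (?d div 2)..<k}"
      then obtain i where i: "Suc (?d div 2) \<le> i" "i < k" "j = a - 1 - 2*i" by auto
      have "2*i \<le> a - 1" using i assms by linarith
      hence "a - 1 - j = 2*i" using i by simp
      moreover have "2*i > ?d" using i by linarith
      ultimately show "j \<in> {j \<in> skip_sel a k. j < h}" using i assms
        unfolding skip_sel_def by auto
    qed
  qed
  have "inj_on (\<lambda>i. a - 1 - 2*i) {Suc (?d div 2)..<k}"
    using assms by (auto simp: inj_on_def)
  thus ?thesis unfolding eq by (simp add: card_image)
qed

lemma tw_nths: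
  assumes "distinct xs" "h < length xs" "xs ! h = b" "h \<in> S"
  shows "length (takeWhile (\<lambda>x. x \<noteq> b) (nths xs S)) = card {j \<in> S. j < h}"
proof -
  have xs: "xs = take h xs @ b # drop (Suc h) xs" using assms id_take_nth_drop by metis
  have "distinct (take h xs @ b # drop (Suc h) xs)" using assms(1) xs by metis
  hence nb: "b \<notin> set (take h xs)" by simp
  have "nths xs S = nths (take h xs) S @ b # nths (drop (Suc h) xs) {j. Suc j + h \<in> S}"
    using assms(2,4) by (subst xs) (simp add: nths_append nths_Cons min_def)
  moreover have "\<forall>x\<in>set (nths (take h xs) S). x \<noteq> b" using nb in_set_nthsD by fastforce
  ultimately have "takeWhile (\<lambda>x. x \<noteq> b) (nths xs S) = nths (take h xs) S"
    by (simp add: takeWhile_append2)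
  moreover have "{i. i < h \<and> i \<in> S} = {j \<in> S. j < h}" by auto
  ultimately show ?thesis using assms(2) by (simp add: length_nths min_def)
qed

lemma nths_disj: "distinct xs \<Longrightarrow> set (nths xs A) \<inter> set (nths xs (-A)) = {}"
  by (auto simp: set_nths nth_eq_iff_index_eq)

lemma wf_upd:
  assumes "wf_config n s" "x < n" "y < n" "x \<noteq> y"
  shows "wf_config n (s(x := nths (s x) (-S), y := s y @ nths (s x) S))"
proof -
  have d: "\<And>i. i<n \<Longrightarrow> distinct (s i)" and dj: "\<And>i j. i<n \<Longrightarrow> j<n \<Longrightarrow> i\<noteq>j \<Longrightarrow> set (s i) \<inter> set (s j) = {}"
    using assms(1) unfolding wf_config_def by auto
  have sub: "\<And>A. set (nths (s x) A) \<subseteq> set (s x)" by (rule set_nths_subset)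
  have dis: "set (nths (s x) S) \<inter> set (nths (s x) (-S)) = {}" using nths_disj d assms(2) by blast
  show ?thesis unfolding wf_config_def
  proof (intro conjI allI impI)
    fix i assume "i < n"
    show "distinct ((s(x := nths (s x) (-S), y := s y @ nths (s x) S)) i)"
      using d[OF \<open>i<n\<close>] d[OF assms(2)] d[OF assms(3)] dj[OF assms(2,3,4)] sub[of S]
      by auto
  next
    fix i j assume ij: "i < n" "j < n" "i \<noteq> j"
    let ?s' = "s(x := nths (s x) (-S), y := s y @ nths (s x) S)"
    have s1: "set (s y) \<inter> set (s x) = {}" "set (s x) \<inter> set (s y) = {}" using dj assms(2,3,4) by auto
    have s2: "\<And>k. k < n \<Longrightarrow> k \<noteq> x \<Longrightarrow> set (s x) \<inter> set (s k) = {} \<and> set (s k) \<inter> set (s x) = {}"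
      using dj assms(2) by blast
    have s3: "\<And>k. k < n \<Longrightarrow> k \<noteq> y \<Longrightarrow> set (s y) \<inter> set (s k) = {} \<and> set (s k) \<inter> set (s y) = {}"
      using dj assms(3) by blast
    have s4: "set (s i) \<inter> set (s j) = {}" using dj ij by blast
    have sub1: "set (nths (s x) S) \<subseteq> set (s x)" "set (nths (s x) (-S)) \<subseteq> set (s x)" using sub by auto
    show "set (?s' i) \<inter> set (?s' j) = {}"
    proof (cases "i = x")
      case True
      then show ?thesis using ij assms(4) s1 s2[of j] sub1 dis by (cases "j = y") auto
    next
      case ix: False
      show ?thesis
      proof (cases "i = y")
        case True
        then show ?thesis using ij ix assms(4) s1 s2[of j] s3[of j] sub1 dis by (cases "j = x") auto
      next
        case False
        then show ?thesis using ij ix assms(4) s2[of i] s3[of i] sub1 s4 by (cases "j = x"; cases "j = y") auto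
      qed
    qed
  qed
qed

lemma step_fwd:
  assumes "length (s v) \<le> length (s u)"
  shows "step s (u,v) = s(u := nths (s u) (- skip_sel (length (s u)) ((length (s u) - length (s v)) div 2)),
           v := s v @ nths (s u) (skip_sel (length (s u)) ((length (s u) - length (s v)) div 2)))"
  using assms by (simp add: step_def Let_def)

lemma step_bwd:
  assumes "length (s v) < length (s u)"
  shows "step s (v,u) = s(u := nths (s u) (- skip_sel (length (s u)) ((length (s u) - length (s v) + 1) div 2)),
           v := s v @ nths (s u) (skip_sel (length (s u)) ((length (s u) - length (s v) + 1) div 2)))"
  using assms by (auto simp: step_def Let_def fun_upd_twist)

lemma step_wf:
  assumes "wf_config n s" "p \<in> pairs n"
  shows "wf_config n (step s p)"
proof -
  obtain u v where p: "p = (u,v)" "u<n" "v<n" "u\<noteq>v" using assms(2) by (auto simp: pairs_def)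
  show ?thesis
  proof (cases "length (s v) \<le> length (s u)")
    case True thus ?thesis using p assms(1) by (simp add: step_fwd wf_upd)
  next
    case False
    hence "length (s u) < length (s v)" by simp
    thus ?thesis using p assms(1) step_bwd[of s u v] wf_upd[of n s v u] by simp
  qed
qed

lemma card_compl_below: "card {i. i < l \<and> i \<notin> S} = l - card {i. i < l \<and> i \<in> S}"
proof -
  have e: "{i. i < l \<and> i \<notin> S} = {..<l} - {i. i < l \<and> i \<in> S}" by auto
  have "card ({..<l} - {i. i < l \<and> i \<in> S}) = card {..<l} - card {i. i < l \<and> i \<in> S}"
    by (rule card_Diff_subset) auto
  thus ?thesis unfolding e by simp
qed

lemma sq_move:
  fixes X Y Q mu :: real
  assumes "0 \<le> Q" "Q \<le> X - Y"
  shows "(X - Q - mu)\<^sup>2 + (Y + Q - mu)\<^sup>2 \<le> (X - mu)\<^sup>2 + (Y - mu)\<^sup>2"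
proof -
  have "0 \<le> Q * ((X - Y) - Q)" using assms by simp
  moreover have "(X - Q - mu)\<^sup>2 + (Y + Q - mu)\<^sup>2 = (X - mu)\<^sup>2 + (Y - mu)\<^sup>2 - 2 * (Q * ((X - Y) - Q))"
    by (simp add: power2_eq_square algebra_simps)
  ultimately show ?thesis by linarith
qed

lemma phi_move:
  assumes "x < n" "y < n" "x \<noteq> y" "length (s y) \<le> length (s x)" "q \<le> length (s x) - length (s y)"
    "length (s' x) = length (s x) - q" "length (s' y) = length (s y) + q"
    "\<And>i. i \<noteq> x \<Longrightarrow> i \<noteq> y \<Longrightarrow> s' i = s i"
  shows "Phi n m s' \<le> Phi n m s"
proof -
  define g where "g t i = (real (length (t i)) - real m / real n)\<^sup>2" for t :: "'a config" and i
  have split: "Phi n m t = g t x + g t y + (\<Sum>i\<in>{..<n}-{x}-{y}. g t i)" for t :: "'a config"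
  proof -
    have "Phi n m t = g t x + (\<Sum>i\<in>{..<n}-{x}. g t i)"
      unfolding Phi_def g_def using assms(1) by (simp add: sum.remove)
    also have "(\<Sum>i\<in>{..<n}-{x}. g t i) = g t y + (\<Sum>i\<in>{..<n}-{x}-{y}. g t i)"
      using assms(2,3) by (subst sum.remove[of _ y]) auto
    finally show ?thesis by simp
  qed
  have rest: "(\<Sum>i\<in>{..<n}-{x}-{y}. g s' i) = (\<Sum>i\<in>{..<n}-{x}-{y}. g s i)"
    using assms(8) by (intro sum.cong) (auto simp: g_def)
  have "g s' x + g s' y \<le> g s x + g s y"
    unfolding g_def assms(6,7) using assms(4,5)
    by (simp add: of_nat_diff sq_move)
  thus ?thesis using split[of s] split[of s'] rest by linarith
qed

lemma step_Phi:
  assumes "p \<in> pairs n"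
  shows "Phi n m (step s p) \<le> Phi n m s"
proof -
  obtain u v where p: "p = (u,v)" "u<n" "v<n" "u\<noteq>v" using assms by (auto simp: pairs_def)
  have gen: "Phi n m (s(x := nths (s x) (- skip_sel (length (s x)) k), y := s y @ nths (s x) (skip_sel (length (s x)) k))) \<le> Phi n m s"
    if "x<n" "y<n" "x\<noteq>y" "length (s y) \<le> length (s x)" "k \<le> length (s x) - length (s y)" for x y k
  proof -
    let ?S = "skip_sel (length (s x)) k"
    let ?q = "card {i. i < length (s x) \<and> i \<in> ?S}"
    have "?q \<le> card ?S" by (intro card_mono) (auto simp: skip_sel_def)
    also have "\<dots> \<le> k" by (rule skip_card_le)
    finally have q: "?q \<le> k" .
    have "?q \<le> length (s x)" using card_mono[of "{..<length (s x)}" "{i. i < length (s x) \<and> i \<in> ?S}"] by auto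
    show ?thesis
      by (rule phi_move[where q="?q"]) (use that q \<open>?q \<le> length (s x)\<close> in \<open>auto simp: length_nths card_compl_below\<close>)
  qed
  show ?thesis
  proof (cases "length (s v) \<le> length (s u)")
    case True thus ?thesis using p by (simp add: step_fwd gen)
  next
    case False
    hence "length (s u) < length (s v)" by simp
    thus ?thesis using p step_bwd[of s u v] gen[of v u] by simp
  qed
qed

lemma node_of_eq:
  assumes "wf_config n s" "i < n" "b \<in> set (s i)"
  shows "node_of n s b = i"
  unfolding node_of_def
proof (rule the_equality)
  show "i < n \<and> b \<in> set (s i)" using assms by simp
  fix j assume "j < n \<and> b \<in> set (s j)"
  thus "j = i" using assms unfolding wf_config_def by blast
qed

lemma tw_less: "b \<in> set xs \<Longrightarrow> length (takeWhile (\<lambda>x. x \<noteq> b) xs) < length xs"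
  by (induct xs) auto

lemma move_height:
  fixes s :: "'tok config"
  assumes wf: "wf_config n s" and uv: "u<n" "v<n" "u\<noteq>v" and bu: "b \<in> set (s u)"
    and k1: "2*k \<le> length (s u) + 1" and k2: "length (s u) \<le> length (s v) + 1 + 2*k"
    and k3: "2*k + length (s v) \<le> length (s u) + 1"
    and hb: "length (s v) + 1 \<le> height n s b"
  shows "2 * height n (s(u := nths (s u) (- skip_sel (length (s u)) k),
            v := s v @ nths (s u) (skip_sel (length (s u)) k))) b \<le> height n s b + length (s v) + 1"
proof -
  define xs where "xs = s u"
  define a where "a = length xs"
  define S where "S = skip_sel a k"
  define s' where "s' = s(u := nths xs (- S), v := s v @ nths xs S)"
  define h where "h = height n s b"
  define bv where "bv = length (s v)"
  have wf': "wf_config n s'" unfolding s'_def xs_def using wf_upd[OF wf uv] .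
  have dxs: "distinct xs" using wf uv unfolding wf_config_def xs_def by auto
  have disj: "set (s v) \<inter> set xs = {}" using wf uv unfolding wf_config_def xs_def by auto
  have "node_of n s b = u" using node_of_eq[OF wf uv(1) bu] .
  hence hdef: "h = length (takeWhile (\<lambda>x. x \<noteq> b) xs)" unfolding h_def height_def xs_def by simp
  have bxs: "b \<in> set xs" using bu xs_def by simp
  have ha: "h < a" unfolding hdef a_def using bxs by (simp add: tw_less)
  have xh: "xs ! h = b" unfolding hdef using bxs using nth_length_takeWhile tw_less by fastforce
  have k1': "2*k \<le> a + 1" and k2': "a \<le> bv + 1 + 2*k" and k3': "2*k + bv \<le> a + 1" and hb': "bv + 1 \<le> h"
    using k1 k2 k3 hb unfolding a_def xs_def bv_def h_def by auto
  define d where "d = a - 1 - h"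
  have q: "card {j \<in> S. j < h} = k - Suc (d div 2)" unfolding S_def d_def using skip_below[OF ha k1'] .
  have dk: "d < 2*k" unfolding d_def using k2' hb' ha by linarith
  show ?thesis
  proof (cases "h \<in> S")
    case True
    hence "b \<in> set (nths xs S)" using ha xh by (auto simp: set_nths a_def)
    hence "b \<in> set (s' v)" unfolding s'_def using uv by simp
    hence "node_of n s' b = v" using node_of_eq[OF wf' uv(2)] by simp
    moreover have "\<forall>x\<in>set (s v). x \<noteq> b" using disj bxs by auto
    ultimately have "height n s' b = bv + length (takeWhile (\<lambda>x. x \<noteq> b) (nths xs S))"
      unfolding height_def s'_def bv_def using uv by (simp add: takeWhile_append2)
    also have "\<dots> = bv + (k - Suc (d div 2))" using tw_nths[OF dxs ha[unfolded a_def] xh True] q by simp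
    finally have H: "height n s' b = bv + (k - Suc (d div 2))" .
    have "even d" using True ha unfolding S_def skip_sel_def d_def by auto
    then obtain e where e: "d = 2*e" by blast
    have "2 * (bv + (k - Suc (d div 2))) \<le> h + bv + 1"
      using e dk k3' ha unfolding d_def by simp
    thus ?thesis unfolding H[unfolded s'_def S_def xs_def a_def] h_def bv_def
      by (simp add: s'_def S_def xs_def a_def)
  next
    case False
    hence "b \<in> set (nths xs (-S))" using ha xh by (auto simp: set_nths a_def)
    hence "b \<in> set (s' u)" unfolding s'_def using uv by simp
    hence "node_of n s' b = u" using node_of_eq[OF wf' uv(1)] by simp
    hence "height n s' b = length (takeWhile (\<lambda>x. x \<noteq> b) (nths xs (-S)))"
      unfolding height_def s'_def using uv by simp
    also have "\<dots> = card {j \<in> -S. j < h}" using tw_nths[OF dxs ha[unfolded a_def] xh] False by simp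
    also have "card {j \<in> -S. j < h} = h - card {j \<in> S. j < h}"
      using card_compl_below[of h S] by (simp add: conj_commute)
    finally have H: "height n s' b = h - (k - Suc (d div 2))" using q by simp
    have "odd d" using False ha dk unfolding S_def skip_sel_def d_def by auto
    then obtain e where e: "d = 2*e+1" using oddE by blast
    have "2 * (h - (k - Suc (d div 2))) \<le> h + bv + 1"
      using e dk k2' ha unfolding d_def by simp
    thus ?thesis unfolding H[unfolded s'_def S_def xs_def a_def] h_def bv_def
      by (simp add: s'_def S_def xs_def a_def)
  qed
qed

lemma card_pairs: "card (pairs n) = n * (n - 1)"
proof -
  have "pairs n = Sigma {..<n} (\<lambda>u. {..<n} - {u})" by (auto simp: pairs_def)
  hence "card (pairs n) = (\<Sum>u<n. card ({..<n} - {u}))" by (simp add: card_SigmaI)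
  also have "\<dots> = (\<Sum>u<n. n - 1)" by (intro sum.cong) auto
  finally show ?thesis by simp
qed

lemma finite_pairs: "finite (pairs n)"
  by (rule finite_subset[of _ "{..<n} \<times> {..<n}"]) (auto simp: pairs_def)

lemma good_pair:
  fixes s :: "'tok config"
  assumes wf: "wf_config n s" and uv: "u<n" "v<n" "u\<noteq>v" and bu: "b \<in> set (s u)"
    and R: "R = round (real m / real n)"
    and hx: "int (height n s b) - R \<ge> 21"
    and bv: "int (length (s v)) \<le> R + 13"
  shows "real_of_int (nheight n m (step s (u,v)) b) \<le> 17 / 20 * real_of_int (nheight n m s b)"
    "real_of_int (nheight n m (step s (v,u)) b) \<le> 17 / 20 * real_of_int (nheight n m s b)"
proof -
  define h where "h = height n s b"
  define a where "a = length (s u)"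
  define c where "c = length (s v)"
  have "node_of n s b = u" using node_of_eq[OF wf uv(1) bu] .
  hence "h < a" unfolding h_def a_def height_def using bu tw_less by simp
  have hc: "c + 1 \<le> h" using hx bv unfolding h_def c_def by linarith
  have fin: "20 * (int h' - R) \<le> 17 * (int h - R)" if "2 * h' \<le> h + c + 1" for h'
  proof -
    have "int (2*h') \<le> int (h + c + 1)" using that by (simp only: of_nat_le_iff)
    hence "2*int h' \<le> int h + int c + 1" by simp
    thus ?thesis using hx bv unfolding h_def c_def by (simp add: algebra_simps)
  qed
  have nh: "nheight n m t b = int (height n t b) - R" for t :: "'tok config"
    unfolding nheight_def R ..
  have conv: "real_of_int (nheight n m t b) \<le> 17 / 20 * real_of_int (nheight n m s b)"
    if "2 * height n t b \<le> h + c + 1" for t :: "'tok config"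
  proof -
    have "20 * (int (height n t b) - R) \<le> 17 * (int h - R)" using fin that by blast
    hence "real_of_int (20 * (int (height n t b) - R)) \<le> real_of_int (17 * (int h - R))" by linarith
    thus ?thesis unfolding nh h_def by simp
  qed
  show "real_of_int (nheight n m (step s (u,v)) b) \<le> 17 / 20 * real_of_int (nheight n m s b)"
  proof (rule conv)
    have le: "length (s v) \<le> length (s u)" using hc \<open>h < a\<close> unfolding a_def c_def by simp
    define k where "k = (a - c) div 2"
    have "2 * height n (s(u := nths (s u) (- skip_sel (length (s u)) k),
            v := s v @ nths (s u) (skip_sel (length (s u)) k))) b \<le> height n s b + length (s v) + 1"
      by (rule move_height[OF wf uv bu]) (use hc \<open>h < a\<close> in \<open>unfold k_def a_def c_def h_def; linarith\<close>)+
    thus "2 * height n (step s (u, v)) b \<le> h + c + 1"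
      unfolding step_fwd[OF le] k_def a_def c_def h_def .
  qed
  show "real_of_int (nheight n m (step s (v,u)) b) \<le> 17 / 20 * real_of_int (nheight n m s b)"
  proof (rule conv)
    have le: "length (s v) < length (s u)" using hc \<open>h < a\<close> unfolding a_def c_def by simp
    define k where "k = (a - c + 1) div 2"
    have "2 * height n (s(u := nths (s u) (- skip_sel (length (s u)) k),
            v := s v @ nths (s u) (skip_sel (length (s u)) k))) b \<le> height n s b + length (s v) + 1"
      by (rule move_height[OF wf uv bu]) (use hc \<open>h < a\<close> in \<open>unfold k_def a_def c_def h_def; linarith\<close>)+
    thus "2 * height n (step s (v, u)) b \<le> h + c + 1"
      unfolding step_bwd[OF le] k_def a_def c_def h_def .
  qed
qed

theorem lemma3:
  fixes c :: real and n m t :: nat and H :: "nat \<Rightarrow> 'tok config"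
    and P :: "nat \<Rightarrow> nat \<times> nat" and b :: 'tok
  assumes c: "c \<ge> 10"
    and n: "n \<ge> 2"
    and init: "wf_config n (H 0)" "(\<Sum>i<n. length (H 0 i)) = m"
    and run: "\<And>k. k < t \<Longrightarrow> P k \<in> pairs n \<and> H (Suc k) = step (H k) (P k)"
    and T1: "\<exists>s\<le>t. Phi n m (H s) < real n"
    and tok: "\<exists>i<n. b \<in> set (H t i)"
    and high: "real_of_int (nheight n m (H t) b) > 2 * c"
  shows "real (card {p \<in> pairs n.
             real_of_int (nheight n m (step (H t) p) b)
               \<le> 17 / 20 * real_of_int (nheight n m (H t) b)})
           / real (card (pairs n)) \<ge> 1 / real n"
proof -
  have wfk: "k \<le> t \<Longrightarrow> wf_config n (H k)" for k
  proof (induction k)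
    case 0 thus ?case using init(1) by simp
  next
    case (Suc k) thus ?case using run[of k] step_wf[of n "H k" "P k"] by auto
  qed
  obtain s0 where s0: "s0 \<le> t" "Phi n m (H s0) < real n" using T1 by blast
  have phik: "k \<le> t \<Longrightarrow> s0 \<le> k \<Longrightarrow> Phi n m (H k) \<le> Phi n m (H s0)" for k
  proof (induction k)
    case 0 thus ?case by simp
  next
    case (Suc k)
    show ?case
    proof (cases "s0 = Suc k")
      case False
      hence "Phi n m (H k) \<le> Phi n m (H s0)" using Suc by simp
      moreover have "Phi n m (H (Suc k)) \<le> Phi n m (H k)" using run[of k] Suc.prems step_Phi[of "P k" n m "H k"] by auto
      ultimately show ?thesis by linarith
    qed simp
  qed
  define s where "s = H t"
  have wf: "wf_config n s" using wfk s_def by simp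
  have phi: "Phi n m s < real n" using phik[of t] s0 s_def by simp
  obtain u where u: "u < n" "b \<in> set (s u)" using tok s_def by blast
  define R where "R = round (real m / real n)"
  have hx: "int (height n s b) - R \<ge> 21"
    using high c unfolding s_def nheight_def R_def by linarith
  have hlt: "height n s b < length (s u)"
    using node_of_eq[OF wf u] u tw_less unfolding height_def by simp
  define V where "V = {v. v < n \<and> v \<noteq> u \<and> int (length (s v)) \<le> R + 13}"
  define Bs where "Bs = {v. v < n \<and> R + 13 < int (length (s v))}"
  define G where "G = {p \<in> pairs n. real_of_int (nheight n m (step (H t) p) b)
               \<le> 17 / 20 * real_of_int (nheight n m (H t) b)}"
  have sub: "(\<lambda>v. (u,v)) ` V \<union> (\<lambda>v. (v,u)) ` V \<subseteq> G"
  proof -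
    have "(u,v) \<in> G \<and> (v,u) \<in> G" if "v \<in> V" for v
    proof -
      have v: "v < n" "v \<noteq> u" "int (length (s v)) \<le> R + 13" using that V_def by auto
      have "u \<noteq> v" using v by simp
      note g = good_pair[OF wf u(1) v(1) this u(2) R_def hx v(3)]
      thus ?thesis using u(1) v unfolding G_def pairs_def s_def by auto
    qed
    thus ?thesis by auto
  qed
  have finG: "finite G" unfolding G_def using finite_pairs by simp
  have finV: "finite V" unfolding V_def by simp
  have "card ((\<lambda>v. (u,v)) ` V \<union> (\<lambda>v. (v,u)) ` V) = card ((\<lambda>v. (u,v)) ` V) + card ((\<lambda>v. (v,u)) ` V)"
    by (rule card_Un_disjoint) (use finV V_def in auto)
  also have "\<dots> = 2 * card V" by (simp add: card_image inj_on_def)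
  finally have cG: "2 * card V \<le> card G" using card_mono[OF finG sub] by simp
  have "int (height n s b) < int (length (s u))" using hlt by simp
  hence "R + 13 < int (length (s u))" using hx by linarith
  hence uB: "u \<in> Bs" using u unfolding Bs_def by simp
  have VB: "V = {..<n} - Bs" unfolding V_def Bs_def using uB Bs_def by auto
  have cV: "card V = n - card Bs" unfolding VB by (subst card_Diff_subset) (auto simp: Bs_def)
  have cBn: "card Bs \<le> n" using card_mono[of "{..<n}" Bs] by (auto simp: Bs_def)
  have Rge: "real_of_int R \<ge> real m / real n - 1/2" unfolding R_def by (rule of_int_round_ge)
  have "(\<Sum>i\<in>Bs. (real (length (s i)) - real m / real n)\<^sup>2) \<le> Phi n m s"
    unfolding Phi_def by (rule sum_mono2) (auto simp: Bs_def)
  moreover have "(\<Sum>i\<in>Bs. (real (length (s i)) - real m / real n)\<^sup>2) \<ge> (\<Sum>i\<in>Bs. 182)"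
  proof (rule sum_mono)
    fix i assume "i \<in> Bs"
    hence "R + 14 \<le> int (length (s i))" unfolding Bs_def by simp
    hence "real_of_int R + 14 \<le> real (length (s i))" by linarith
    hence "13.5 \<le> real (length (s i)) - real m / real n" using Rge by linarith
    hence "13.5 * 13.5 \<le> (real (length (s i)) - real m / real n) * (real (length (s i)) - real m / real n)"
      by (intro mult_mono) auto
    thus "182 \<le> (real (length (s i)) - real m / real n)\<^sup>2" unfolding power2_eq_square by linarith
  qed
  ultimately have "182 * real (card Bs) < real n" using phi by simp
  hence key: "real n - 1 \<le> real (card G)" using cG cV cBn
    by (simp add: of_nat_diff) linarith?
  have np: "real (card (pairs n)) = real n * (real n - 1)" using n by (simp add: card_pairs of_nat_diff)
  have pos: "0 < real n * (real n - 1)" using n by simp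
  have "1 / real n = (real n - 1) / (real n * (real n - 1))" using n by (simp add: field_simps)
  also have "\<dots> \<le> real (card G) / (real n * (real n - 1))"
    by (rule divide_right_mono) (use key pos in auto)
  finally show ?thesis unfolding np G_def by simp
qed

end
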